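(* Let $G$ be a discrete group, $\mathbf k\subseteq{\rm Seq}(\mathbf C)$ a $\sigma$-subring with constants $\mathbf C$, $\alpha\in\mathcal C_c(G,\mathbf k)$, and $\phi$ the fundamental solution of $\sigma(s)=\alpha\star s$. Then: (a) ${\rm Sol}_c(\alpha,L^c)$ is a monogenous right $G$-module, namely ${\rm Sol}_c(\alpha,L^c)=\bigoplus_{g\in G}\langle\phi\star g\rangle$; (b) ${\rm Sol}(\alpha,L)=\prod_{g\in G}\langle\phi\star g\rangle$; (c) ${\rm Sol}_{\rm per}(\alpha,L^{\rm per})$ is a union of finite dimensional $G$-modules and admits a natural structure of $G^{\rm pro}$-module, where $G^{\rm pro}$ is the profinite completion of $G$.
   Context: ${\rm Seq}(\mathbf C)$: complex sequences indexed by $t\in\mathbf Z_{\ge0}$ with shift $\sigma(x)^{(t)}=x^{(t+1)}$. $\mathcal C_c(G,\mathbf k)$: finitely supported functions $G\to\mathbf k$. The equation $\sigma(s)=\alpha\star s$ means $s_g^{(t+1)}=\sum_{h\in G}\alpha^{(t)}_hs^{(t)}_{h^{-1}g}$ for $s\in\mathcal C(G,{\rm Seq}(\mathbf C))$; its fundamental solution $\phi$ is the solution with $\phi^{(0)}_e=1$, $\phi^{(0)}_g=0$ for $g\neq e$. $G$ acts on the right by $(s\star g)_h=s_{hg^{-1}}$, and solutions are mapped to solutions. ${\rm Sol}(\alpha,L)$ is the $\mathbf C$-space of all solutions; ${\rm Sol}_c(\alpha,L^c)$ the solutions with $s^{(t)}$ of finite support for every $t$; ${\rm Sol}_{\rm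 per}(\alpha,L^{\rm per})$ the solutions that are $H$-periodic ($s_{gh}=s_g$ for $h\in H$) for some normal subgroup $H$ of finite index. $\langle\phi\star g\rangle$ is the complex line spanned by $\phi\star g$; $\prod_{g\in G}\langle\phi\star g\rangle$ denotes the set of sums $\sum_g c_g\,\phi\star g$, $c_g\in\mathbf C$, which are finite when evaluated at any $(g,t)$. *)

theory Defs
  imports Complex_Main
begin

text \<open>The discrete group G is a type of class group_add, written additively
  (not necessarily commutative): the neutral element e is 0, the product g h is g + h,
  and the inverse of h is - h.  Seq(C) is nat => complex with pointwise operations.\<close>

definition shift :: "(nat \<Rightarrow> complex) \<Rightarrow> nat \<Rightarrow> complex" where
  "shift x = (\<lambda>t. x (Suc t))"

definition sigma_subring_const_C :: "(nat \<Rightarrow> complex) set \<Rightarrow> bool" where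
  "sigma_subring_const_C K \<longleftrightarrow>
     (\<lambda>t. 0) \<in> K \<and> (\<lambda>t. 1) \<in> K \<and>
     (\<forall>x\<in>K. \<forall>y\<in>K. (\<lambda>t. x t + y t) \<in> K \<and> (\<lambda>t. x t * y t) \<in> K) \<and>
     (\<forall>x\<in>K. (\<lambda>t. - x t) \<in> K) \<and>
     (\<forall>x\<in>K. shift x \<in> K) \<and>
     {x\<in>K. shift x = x} = range (\<lambda>c::complex. \<lambda>t::nat. c)"

definition supp :: "('g \<Rightarrow> nat \<Rightarrow> complex) \<Rightarrow> 'g set" where
  "supp a = {h. a h \<noteq> (\<lambda>t. 0)}"

text \<open>s solves sigma(s) = alpha * s (alpha finitely supported).\<close>
definition is_sol :: "('g::group_add \<Rightarrow> nat \<Rightarrow> complex) \<Rightarrow> ('g \<Rightarrow> nat \<Rightarrow> complex) \<Rightarrow> bool" where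
  "is_sol \<alpha> s \<longleftrightarrow> (\<forall>g t. s g (Suc t) = (\<Sum>h\<in>supp \<alpha>. \<alpha> h t * s (- h + g) t))"

definition Sol :: "('g::group_add \<Rightarrow> nat \<Rightarrow> complex) \<Rightarrow> ('g \<Rightarrow> nat \<Rightarrow> complex) set" where
  "Sol \<alpha> = {s. is_sol \<alpha> s}"

definition Sol_c :: "('g::group_add \<Rightarrow> nat \<Rightarrow> complex) \<Rightarrow> ('g \<Rightarrow> nat \<Rightarrow> complex) set" where
  "Sol_c \<alpha> = {s. is_sol \<alpha> s \<and> (\<forall>t. finite {g. s g t \<noteq> 0})}"

definition ract :: "('g::group_add \<Rightarrow> nat \<Rightarrow> complex) \<Rightarrow> 'g \<Rightarrow> ('g \<Rightarrow> nat \<Rightarrow> complex)" where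
  "ract s g = (\<lambda>h. s (h + - g))"

definition nfi_subgroup :: "'g::group_add set \<Rightarrow> bool" where
  "nfi_subgroup H \<longleftrightarrow> 0 \<in> H \<and> (\<forall>a\<in>H. \<forall>b\<in>H. a + b \<in> H) \<and> (\<forall>a\<in>H. - a \<in> H) \<and>
     (\<forall>g. \<forall>h\<in>H. g + h + - g \<in> H) \<and>
     finite ((\<lambda>g. (\<lambda>h. g + h) ` H) ` UNIV)"

definition periodic :: "'g::group_add set \<Rightarrow> ('g \<Rightarrow> nat \<Rightarrow> complex) \<Rightarrow> bool" where
  "periodic H s \<longleftrightarrow> (\<forall>g. \<forall>h\<in>H. s (g + h) = s g)"

definition Sol_per :: "('g::group_add \<Rightarrow> nat \<Rightarrow> complex) \<Rightarrow> ('g \<Rightarrow> nat \<Rightarrow> complex) set" where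
  "Sol_per \<alpha> = {s. is_sol \<alpha> s \<and> (\<exists>H. nfi_subgroup H \<and> periodic H s)}"

definition fd_G_module :: "('g::group_add \<Rightarrow> nat \<Rightarrow> complex) set \<Rightarrow> bool" where
  "fd_G_module V \<longleftrightarrow>
     (\<exists>B. finite B \<and> V = {(\<lambda>h t. \<Sum>b\<in>B. c b * b h t) | c. True}) \<and>
     (\<forall>v\<in>V. \<forall>g. ract v g \<in> V)"

text \<open>Profinite completion of G: the inverse limit of the finite quotients G/H over normal
  subgroups of finite index H, realised as compatible families of cosets
  (extended by {} outside the index set).\<close>
definition profin :: "('g::group_add set \<Rightarrow> 'g set) set" where
  "profin = {x. (\<forall>H. nfi_subgroup H \<longrightarrow> x H \<in> (\<lambda>g. (\<lambda>h. g + h) ` H) ` UNIV) \<and>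
                (\<forall>H K. nfi_subgroup H \<and> nfi_subgroup K \<and> H \<subseteq> K \<longrightarrow> x H \<subseteq> x K) \<and>
                (\<forall>H. \<not> nfi_subgroup H \<longrightarrow> x H = {})}"

definition profin_mult :: "('g::group_add set \<Rightarrow> 'g set) \<Rightarrow> ('g set \<Rightarrow> 'g set) \<Rightarrow> ('g set \<Rightarrow> 'g set)" where
  "profin_mult x y = (\<lambda>H. {a + b | a b. a \<in> x H \<and> b \<in> y H})"

definition profin_of :: "'g::group_add \<Rightarrow> ('g set \<Rightarrow> 'g set)" where
  "profin_of g = (\<lambda>H. if nfi_subgroup H then (\<lambda>h. g + h) ` H else {})"

end

theory Submission
  imports Defs
begin


lemma sol_unique:
  assumes "is_sol \<alpha> s" "is_sol \<alpha> s'" "\<forall>g. s g 0 = s' g 0"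
  shows "s = s'"
proof -
  have "\<forall>g. s g t = s' g t" for t
  proof (induction t)
    case 0 then show ?case using assms(3) by simp
  next
    case (Suc t) then show ?case using assms(1,2) unfolding is_sol_def by simp
  qed
  then show ?thesis by (auto intro!: ext)
qed

lemma phi_fin:
  assumes "finite (supp \<alpha>)" "is_sol \<alpha> \<phi>" "\<forall>g. \<phi> g 0 = (if g = 0 then 1 else 0)"
  shows "finite {g. \<phi> g t \<noteq> 0}"
proof (induction t)
  case 0
  have "{g. \<phi> g 0 \<noteq> 0} \<subseteq> {0}" using assms(3) by auto
  then show ?case using finite_subset by blast
next
  case (Suc t)
  have "{g. \<phi> g (Suc t) \<noteq> 0} \<subseteq> (\<lambda>(k,d). k + d) ` (supp \<alpha> \<times> {g. \<phi> g t \<noteq> 0})"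
  proof
    fix g assume "g \<in> {g. \<phi> g (Suc t) \<noteq> 0}"
    then have "(\<Sum>h\<in>supp \<alpha>. \<alpha> h t * \<phi> (- h + g) t) \<noteq> 0" using assms(2) unfolding is_sol_def by simp
    then obtain k where k: "k \<in> supp \<alpha>" "\<phi> (- k + g) t \<noteq> 0"
      by (metis (no_types, lifting) mult_zero_right sum.neutral)
    then have "g = (\<lambda>(k,d). k + d) (k, - k + g)" by (simp add: add.assoc[symmetric])
    then show "g \<in> (\<lambda>(k,d). k + d) ` (supp \<alpha> \<times> {g. \<phi> g t \<noteq> 0})" using k by blast
  qed
  then show ?case using Suc assms(1) finite_subset by blast
qed

definition Phi :: "('g::group_add \<Rightarrow> nat \<Rightarrow> complex) \<Rightarrow> ('g \<Rightarrow> complex) \<Rightarrow> 'g \<Rightarrow> nat \<Rightarrow> complex" where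
  "Phi \<phi> c h t = (\<Sum>g\<in>{g. \<phi> (h + - g) t \<noteq> 0}. c g * \<phi> (h + - g) t)"

lemma E_fin:
  assumes "finite {g. \<phi> g t \<noteq> 0}"
  shows "finite {g::'g::group_add. \<phi> (h + - g) t \<noteq> 0}"
proof -
  have "{g. \<phi> (h + - g) t \<noteq> 0} \<subseteq> (\<lambda>d. - d + h) ` {g. \<phi> g t \<noteq> 0}"
  proof
    fix g assume "g \<in> {g. \<phi> (h + - g) t \<noteq> 0}"
    moreover have "g = - (h + - g) + h" by (simp add: minus_add add.assoc)
    ultimately show "g \<in> (\<lambda>d. - d + h) ` {g. \<phi> g t \<noteq> 0}" by blast
  qed
  then show ?thesis using assms finite_subset by blast
qed

lemma sum_eq_support:
  assumes "finite A" "finite B" "\<forall>x\<in>A - B. f x = 0" "\<forall>x\<in>B - A. f x = 0"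
  shows "sum f A = sum f B"
proof -
  have "sum f A = sum f (A \<union> B)" using assms by (intro sum.mono_neutral_left) auto
  also have "\<dots> = sum f B" using assms by (intro sum.mono_neutral_right) auto
  finally show ?thesis .
qed

lemma Phi_eq:
  assumes "finite {g. \<phi> g t \<noteq> 0}" "finite F" "{g. c g * \<phi> (h + - g) t \<noteq> 0} \<subseteq> F"
  shows "(\<Sum>g\<in>F. c g * \<phi> (h + - g) t) = Phi \<phi> c h t"
  unfolding Phi_def using assms E_fin[where \<phi>=\<phi> and t=t and h=h, OF assms(1)]
  by (intro sum_eq_support) auto

lemma Phi_sol:
  assumes fa: "finite (supp \<alpha>)" and sol: "is_sol \<alpha> \<phi>" and init: "\<forall>g. \<phi> g 0 = (if g = 0 then 1 else 0)"
  shows "is_sol \<alpha> (Phi \<phi> c)"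
  unfolding is_sol_def
proof (intro allI)
  fix h t
  have fin: "\<And>t. finite {g. \<phi> g t \<noteq> 0}" using phi_fin[OF assms] .
  define F where "F = {g. \<phi> (h + - g) (Suc t) \<noteq> 0} \<union> (\<Union>k\<in>supp \<alpha>. {g. \<phi> (- k + h + - g) t \<noteq> 0})"
  have fF: "finite F" unfolding F_def using fa E_fin[where \<phi>=\<phi>, OF fin] by auto
  have "Phi \<phi> c h (Suc t) = (\<Sum>g\<in>F. c g * \<phi> (h + - g) (Suc t))"
    by (rule Phi_eq[symmetric, OF fin fF]) (auto simp: F_def)
  also have "\<dots> = (\<Sum>g\<in>F. c g * (\<Sum>k\<in>supp \<alpha>. \<alpha> k t * \<phi> (- k + h + - g) t))"
    using sol unfolding is_sol_def by (simp add: add.assoc add_diff_eq)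
  also have "\<dots> = (\<Sum>k\<in>supp \<alpha>. \<alpha> k t * (\<Sum>g\<in>F. c g * \<phi> (- k + h + - g) t))"
    by (simp add: sum_distrib_left sum.swap[of _ F] mult.left_commute)
  also have "\<dots> = (\<Sum>k\<in>supp \<alpha>. \<alpha> k t * Phi \<phi> c (- k + h) t)"
    by (intro sum.cong refl arg_cong2[where f="(*)"] Phi_eq[OF fin fF]) (auto simp: F_def)
  finally show "Phi \<phi> c h (Suc t) = (\<Sum>k\<in>supp \<alpha>. \<alpha> k t * Phi \<phi> c (- k + h) t)" .
qed

lemma Phi_init:
  assumes "finite (supp \<alpha>)" "is_sol \<alpha> \<phi>" and init: "\<forall>g. \<phi> g 0 = (if g = 0 then 1 else 0)"
  shows "Phi \<phi> c h 0 = c h"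
proof -
  have "Phi \<phi> c h 0 = (\<Sum>g\<in>{h}. c g * \<phi> (h + - g) 0)"
    using init by (intro Phi_eq[symmetric] phi_fin[OF assms]) auto
  then show ?thesis using init by simp
qed

lemma Phi_expr_b:
  assumes fin: "\<And>t. finite {g. \<phi> g t \<noteq> 0}"
  shows "(\<lambda>h t. \<Sum>g | c g * ract \<phi> g h t \<noteq> 0. c g * ract \<phi> g h t) = Phi \<phi> c"
proof (intro ext)
  fix h t
  have "finite {g. c g * \<phi> (h + - g) t \<noteq> 0}"
    by (rule finite_subset[OF _ E_fin[where \<phi>=\<phi> and t=t and h=h, OF fin]]) auto
  then show "(\<Sum>g | c g * ract \<phi> g h t \<noteq> 0. c g * ract \<phi> g h t) = Phi \<phi> c h t"
    unfolding ract_def by (intro Phi_eq[OF fin]) auto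
qed

lemma Phi_expr_a:
  assumes fin: "\<And>t. finite {g. \<phi> g t \<noteq> 0}" and fc: "finite {g. c g \<noteq> 0}"
  shows "(\<lambda>h t. \<Sum>g\<in>{g. c g \<noteq> 0}. c g * ract \<phi> g h t) = Phi \<phi> c"
  unfolding ract_def by (intro ext Phi_eq[OF fin fc]) auto

lemma part_b:
  assumes fa: "finite (supp \<alpha>)" and sol: "is_sol \<alpha> \<phi>" and init: "\<forall>g. \<phi> g 0 = (if g = 0 then 1 else 0)"
  shows "Sol \<alpha> = {(\<lambda>h t. \<Sum>g | c g * ract \<phi> g h t \<noteq> 0. c g * ract \<phi> g h t) | c.
                  \<forall>h t. finite {g. c g * ract \<phi> g h t \<noteq> 0}}"
proof -
  have fin: "\<And>t. finite {g. \<phi> g t \<noteq> 0}" using phi_fin[OF assms] .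
  have fin2: "finite {g. c g * ract \<phi> g h t \<noteq> 0}" for c h t
    unfolding ract_def
    by (rule finite_subset[OF _ E_fin[where \<phi>=\<phi> and t=t and h=h, OF fin]]) auto
  show ?thesis
  proof (intro equalityI subsetI)
    fix s assume "s \<in> Sol \<alpha>"
    then have ss: "is_sol \<alpha> s" by (simp add: Sol_def)
    have "s = Phi \<phi> (\<lambda>g. s g 0)"
      by (rule sol_unique[OF ss Phi_sol[OF assms]]) (simp add: Phi_init[OF assms])
    also have "\<dots> = (\<lambda>h t. \<Sum>g | s g 0 * ract \<phi> g h t \<noteq> 0. s g 0 * ract \<phi> g h t)"
      using Phi_expr_b[where \<phi>=\<phi>, OF fin, of "\<lambda>g. s g 0"] by simp
    finally show "s \<in> {(\<lambda>h t. \<Sum>g | c g * ract \<phi> g h t \<noteq> 0. c g * ract \<phi> g h t) | c.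
                  \<forall>h t. finite {g. c g * ract \<phi> g h t \<noteq> 0}}"
      by (intro CollectI exI[of _ "\<lambda>g. s g 0"] conjI) (use fin2 in auto)
  next
    fix s assume "s \<in> {(\<lambda>h t. \<Sum>g | c g * ract \<phi> g h t \<noteq> 0. c g * ract \<phi> g h t) | c.
                  \<forall>h t. finite {g. c g * ract \<phi> g h t \<noteq> 0}}"
    then obtain c where "s = (\<lambda>h t. \<Sum>g | c g * ract \<phi> g h t \<noteq> 0. c g * ract \<phi> g h t)" by blast
    then have "s = Phi \<phi> c" using Phi_expr_b[where \<phi>=\<phi>, OF fin] by simp
    then show "s \<in> Sol \<alpha>" using Phi_sol[OF assms] by (simp add: Sol_def)
  qed
qed

lemma part_a:
  assumes fa: "finite (supp \<alpha>)" and sol: "is_sol \<alpha> \<phi>" and init: "\<forall>g. \<phi> g 0 = (if g = 0 then 1 else 0)"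
  shows "(Sol_c \<alpha> = {(\<lambda>h t. \<Sum>g\<in>{g. c g \<noteq> 0}. c g * ract \<phi> g h t) | c. finite {g. c g \<noteq> 0}}) \<and>
     (\<forall>c. finite {g. c g \<noteq> 0} \<longrightarrow>
          (\<lambda>h t. \<Sum>g\<in>{g. c g \<noteq> 0}. c g * ract \<phi> g h t) = (\<lambda>h t. 0) \<longrightarrow> (\<forall>g. c g = 0))"
proof -
  have fin: "\<And>t. finite {g. \<phi> g t \<noteq> 0}" using phi_fin[OF assms] .
  have PhiC: "Phi \<phi> c \<in> Sol_c \<alpha>" if fc: "finite {g. c g \<noteq> 0}" for c
  proof -
    have "finite {h. Phi \<phi> c h t \<noteq> 0}" for t
    proof -
      have "{h. Phi \<phi> c h t \<noteq> 0} \<subseteq> (\<lambda>(d,g). d + g) ` ({g. \<phi> g t \<noteq> 0} \<times> {g. c g \<noteq> 0})"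
      proof
        fix h assume "h \<in> {h. Phi \<phi> c h t \<noteq> 0}"
        then have "(\<Sum>g\<in>{g. \<phi> (h + - g) t \<noteq> 0}. c g * \<phi> (h + - g) t) \<noteq> 0" by (simp add: Phi_def)
        then obtain g where g: "c g * \<phi> (h + - g) t \<noteq> 0"
          by (meson sum.neutral)
        have "h = (\<lambda>(d,g). d + g) (h + - g, g)" by (simp add: add.assoc)
        then show "h \<in> (\<lambda>(d,g). d + g) ` ({g. \<phi> g t \<noteq> 0} \<times> {g. c g \<noteq> 0})" using g by (intro image_eqI[of _ _ "(h + - g, g)"]) auto
      qed
      moreover have "finite ({g. \<phi> g t \<noteq> 0} \<times> {g. c g \<noteq> 0})" by (intro finite_cartesian_product fin fc)
      ultimately show ?thesis by (rule finite_subset[OF _ finite_imageI])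
    qed
    then show ?thesis using Phi_sol[OF assms] by (simp add: Sol_c_def)
  qed
  have A: "Sol_c \<alpha> = {(\<lambda>h t. \<Sum>g\<in>{g. c g \<noteq> 0}. c g * ract \<phi> g h t) | c. finite {g. c g \<noteq> 0}}"
  proof (intro equalityI subsetI)
    fix s assume "s \<in> Sol_c \<alpha>"
    then have ss: "is_sol \<alpha> s" and f0: "finite {g. s g 0 \<noteq> 0}" by (auto simp: Sol_c_def)
    have "s = Phi \<phi> (\<lambda>g. s g 0)"
      by (rule sol_unique[OF ss Phi_sol[OF assms]]) (simp add: Phi_init[OF assms])
    also have "\<dots> = (\<lambda>h t. \<Sum>g\<in>{g. s g 0 \<noteq> 0}. s g 0 * ract \<phi> g h t)"
      using Phi_expr_a[where \<phi>=\<phi>, OF fin f0] by simp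
    finally show "s \<in> {(\<lambda>h t. \<Sum>g\<in>{g. c g \<noteq> 0}. c g * ract \<phi> g h t) | c. finite {g. c g \<noteq> 0}}"
      by (intro CollectI exI[of _ "\<lambda>g. s g 0"] conjI f0)
  next
    fix s assume "s \<in> {(\<lambda>h t. \<Sum>g\<in>{g. c g \<noteq> 0}. c g * ract \<phi> g h t) | c. finite {g. c g \<noteq> 0}}"
    then obtain c where "s = (\<lambda>h t. \<Sum>g\<in>{g. c g \<noteq> 0}. c g * ract \<phi> g h t)" and fc: "finite {g. c g \<noteq> 0}" by blast
    then have "s = Phi \<phi> c" using Phi_expr_a[where \<phi>=\<phi>, OF fin fc] by simp
    then show "s \<in> Sol_c \<alpha>" using PhiC[OF fc] by simp
  qed
  have B: "\<forall>c. finite {g. c g \<noteq> 0} \<longrightarrow>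
          (\<lambda>h t. \<Sum>g\<in>{g. c g \<noteq> 0}. c g * ract \<phi> g h t) = (\<lambda>h t. 0) \<longrightarrow> (\<forall>g. c g = 0)"
  proof (intro allI impI)
    fix c g assume fc: "finite {g. c g \<noteq> 0}" and z: "(\<lambda>h t. \<Sum>g\<in>{g. c g \<noteq> 0}. c g * ract \<phi> g h t) = (\<lambda>h t. 0)"
    then have "Phi \<phi> c = (\<lambda>h t. 0)" using Phi_expr_a[where \<phi>=\<phi>, OF fin fc] by simp
    then have "Phi \<phi> c g 0 = 0" by simp
    then show "c g = 0" using Phi_init[OF assms] by simp
  qed
  show ?thesis by (rule conjI[OF A B])
qed



lemma ract_ract: "ract (ract s a) b = ract s (a + b)"
  by (simp add: ract_def minus_add add.assoc diff_conv_add_uminus del: add_uminus_conv_diff)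

lemma ract_0: "ract s 0 = s"
  by (simp add: ract_def)

lemma sol_ract: "is_sol \<alpha> s \<Longrightarrow> is_sol \<alpha> (ract s g)"
  by (simp add: is_sol_def ract_def add.assoc diff_conv_add_uminus del: add_uminus_conv_diff)

lemma nfi_normal: "nfi_subgroup H \<Longrightarrow> k \<in> H \<Longrightarrow> g + k + - g \<in> H"
  by (simp add: nfi_subgroup_def del: add_uminus_conv_diff)

lemma ract_per:
  assumes "nfi_subgroup H" "periodic H s" "k \<in> H"
  shows "ract s (g + k) = ract s g"
proof (rule ext)
  fix h
  have m: "g + - k + - g \<in> H" using assms(1,3) by (simp add: nfi_subgroup_def del: add_uminus_conv_diff)
  have "ract s (g + k) h = s (h + - k + - g)" by (simp add: ract_def minus_add add.assoc diff_conv_add_uminus del: add_uminus_conv_diff)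
  also have "h + - k + - g = (h + - g) + (g + - k + - g)" by (simp add: add.assoc diff_conv_add_uminus del: add_uminus_conv_diff)
  also have "s \<dots> = s (h + - g)" using assms(2) m by (simp add: periodic_def del: add_uminus_conv_diff)
  finally show "ract s (g + k) h = ract s g h" by (simp add: ract_def)
qed

lemma per_ract:
  assumes "nfi_subgroup H" "periodic H s"
  shows "periodic H (ract s g)"
  unfolding periodic_def
proof (intro allI ballI)
  fix x k assume k: "k \<in> H"
  have m: "g + k + - g \<in> H" using assms k nfi_normal by blast
  have "ract s g (x + k) = s (x + k + - g)" by (simp add: ract_def)
  also have "x + k + - g = (x + - g) + (g + k + - g)" by (simp add: add.assoc diff_conv_add_uminus del: add_uminus_conv_diff)
  also have "s \<dots> = s (x + - g)" using assms(2) m by (simp add: periodic_def del: add_uminus_conv_diff)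
  finally show "ract s g (x + k) = ract s g x" by (simp add: ract_def)
qed

lemma per_mono: "periodic H s \<Longrightarrow> K \<subseteq> H \<Longrightarrow> periodic K s"
  by (auto simp: periodic_def)

lemma nfi_inter:
  assumes "nfi_subgroup H1" "nfi_subgroup H2"
  shows "nfi_subgroup (H1 \<inter> H2)"
proof -
  have "(\<lambda>g. (\<lambda>h. g + h) ` (H1 \<inter> H2)) ` UNIV \<subseteq>
        (\<lambda>(A,B). A \<inter> B) ` ((\<lambda>g. (\<lambda>h. g + h) ` H1) ` UNIV \<times> (\<lambda>g. (\<lambda>h. g + h) ` H2) ` UNIV)"
  proof
    fix C assume "C \<in> (\<lambda>g. (\<lambda>h. g + h) ` (H1 \<inter> H2)) ` UNIV"
    then obtain g where C: "C = (\<lambda>h. g + h) ` (H1 \<inter> H2)" by blast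
    have "inj (\<lambda>h. g + h)" by (simp add: inj_def)
    then have "C = (\<lambda>(A,B). A \<inter> B) ((\<lambda>h. g + h) ` H1, (\<lambda>h. g + h) ` H2)"
      using C by (simp add: image_Int)
    then show "C \<in> (\<lambda>(A,B). A \<inter> B) ` ((\<lambda>g. (\<lambda>h. g + h) ` H1) ` UNIV \<times> (\<lambda>g. (\<lambda>h. g + h) ` H2) ` UNIV)"
      by (intro image_eqI[of _ _ "((\<lambda>h. g + h) ` H1, (\<lambda>h. g + h) ` H2)"]) auto
  qed
  moreover have "finite ((\<lambda>g. (\<lambda>h. g + h) ` H1) ` UNIV \<times> (\<lambda>g. (\<lambda>h. g + h) ` H2) ` UNIV)"
    using assms by (intro finite_cartesian_product) (auto simp: nfi_subgroup_def)
  ultimately have "finite ((\<lambda>g. (\<lambda>h. g + h) ` (H1 \<inter> H2)) ` UNIV)"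
    by (rule finite_subset[OF _ finite_imageI])
  then show ?thesis using assms by (auto simp: nfi_subgroup_def)
qed

lemma profin_ne:
  assumes "x \<in> profin" "nfi_subgroup H"
  obtains g where "g \<in> x H"
proof -
  obtain a where "x H = (\<lambda>h. a + h) ` H" using assms by (auto simp: profin_def)
  moreover have "0 \<in> H" using assms(2) by (simp add: nfi_subgroup_def)
  ultimately have "a \<in> x H" by (metis add_0_right image_eqI)
  then show ?thesis using that by blast
qed

lemma profin_same_coset:
  assumes "x \<in> profin" "nfi_subgroup H" "a \<in> x H" "b \<in> x H"
  shows "\<exists>k\<in>H. a = b + k"
proof -
  obtain c where c: "x H = (\<lambda>h. c + h) ` H" using assms by (auto simp: profin_def)
  then obtain k1 k2 where "k1 \<in> H" "k2 \<in> H" "a = c + k1" "b = c + k2" using assms by auto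
  moreover have "- k2 + k1 \<in> H" using assms(2) \<open>k1 \<in> H\<close> \<open>k2 \<in> H\<close> by (simp add: nfi_subgroup_def)
  ultimately show ?thesis by (intro bexI[of _ "- k2 + k1"]) (simp_all add: add.assoc diff_conv_add_uminus del: add_uminus_conv_diff)
qed

lemma key_L:
  assumes "nfi_subgroup H1" "nfi_subgroup H2" "periodic H1 s" "periodic H2 s"
    "x \<in> profin" "g1 \<in> x H1" "g2 \<in> x H2"
  shows "ract s g1 = ract s g2"
proof -
  have K: "nfi_subgroup (H1 \<inter> H2)" using nfi_inter assms by blast
  obtain c where c: "c \<in> x (H1 \<inter> H2)" using profin_ne[OF assms(5) K] by blast
  have "x (H1 \<inter> H2) \<subseteq> x H1" "x (H1 \<inter> H2) \<subseteq> x H2"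
    using assms(1,2,5) K by (auto simp: profin_def)
  then have c1: "c \<in> x H1" and c2: "c \<in> x H2" using c by auto
  obtain k1 where "k1 \<in> H1" "g1 = c + k1" using profin_same_coset[OF assms(5,1,6) c1] by blast
  then have "ract s g1 = ract s c" using ract_per assms by blast
  moreover obtain k2 where "k2 \<in> H2" "g2 = c + k2" using profin_same_coset[OF assms(5,2,7) c2] by blast
  then have "ract s g2 = ract s c" using ract_per assms by blast
  ultimately show ?thesis by simp
qed

definition Hs :: "('g::group_add \<Rightarrow> nat \<Rightarrow> complex) \<Rightarrow> 'g set" where
  "Hs s = (SOME H. nfi_subgroup H \<and> periodic H s)"

definition act_pro :: "('g::group_add \<Rightarrow> nat \<Rightarrow> complex) \<Rightarrow> ('g set \<Rightarrow> 'g set) \<Rightarrow> ('g \<Rightarrow> nat \<Rightarrow> complex)" where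
  "act_pro s x = ract s (SOME g. g \<in> x (Hs s))"

lemma Hs_spec: "nfi_subgroup H \<Longrightarrow> periodic H s \<Longrightarrow> nfi_subgroup (Hs s) \<and> periodic (Hs s) s"
  unfolding Hs_def by (rule someI[of "\<lambda>H. nfi_subgroup H \<and> periodic H s"]) blast

lemma act_A:
  assumes "nfi_subgroup H" "periodic H s" "x \<in> profin" "g \<in> x H"
  shows "act_pro s x = ract s g"
proof -
  have hs: "nfi_subgroup (Hs s)" "periodic (Hs s) s" using Hs_spec[OF assms(1,2)] by auto
  obtain a where "a \<in> x (Hs s)" using profin_ne[OF assms(3) hs(1)] by blast
  then have "(SOME g. g \<in> x (Hs s)) \<in> x (Hs s)" by (rule someI)
  then have "ract s (SOME g. g \<in> x (Hs s)) = ract s g"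
    using key_L[OF hs(1) assms(1) hs(2) assms(2,3) _ assms(4)] by blast
  then show ?thesis by (simp add: act_pro_def)
qed



lemma sol_lin:
  assumes "finite B" "\<forall>b\<in>B. is_sol \<alpha> b"
  shows "is_sol \<alpha> (\<lambda>h t. \<Sum>b\<in>B. c b * b h t)"
  unfolding is_sol_def
proof (intro allI)
  fix g t
  have "(\<Sum>b\<in>B. c b * b g (Suc t)) = (\<Sum>b\<in>B. c b * (\<Sum>h\<in>supp \<alpha>. \<alpha> h t * b (- h + g) t))"
    using assms(2) unfolding is_sol_def by simp
  also have "\<dots> = (\<Sum>h\<in>supp \<alpha>. \<alpha> h t * (\<Sum>b\<in>B. c b * b (- h + g) t))"
    by (simp add: sum_distrib_left sum.swap[of _ B] mult.left_commute)
  finally show "(\<Sum>b\<in>B. c b * b g (Suc t)) = (\<Sum>h\<in>supp \<alpha>. \<alpha> h t * (\<Sum>b\<in>B. c b * b (- h + g) t))" .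
qed

lemma per_lin:
  assumes "\<forall>b\<in>B. periodic H b"
  shows "periodic H (\<lambda>h t. \<Sum>b\<in>B. c b * b h t)"
  using assms by (simp add: periodic_def)

lemma part_c1:
  assumes "s \<in> Sol_per \<alpha>"
  shows "\<exists>V. s \<in> V \<and> V \<subseteq> Sol_per \<alpha> \<and> fd_G_module V"
proof -
  obtain H where ss: "is_sol \<alpha> s" and H: "nfi_subgroup H" "periodic H s"
    using assms by (auto simp: Sol_per_def)
  define B where "B = range (ract s)"
  have finB: "finite B"
  proof -
    have "B \<subseteq> (\<lambda>C. ract s (SOME g. g \<in> C)) ` ((\<lambda>g. (\<lambda>h. g + h) ` H) ` UNIV)"
    proof
      fix b assume "b \<in> B"
      then obtain g where b: "b = ract s g" by (auto simp: B_def)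
      have "g \<in> (\<lambda>h. g + h) ` H" using H(1) by (auto simp: nfi_subgroup_def intro: image_eqI[of _ _ 0])
      then have "(SOME g'. g' \<in> (\<lambda>h. g + h) ` H) \<in> (\<lambda>h. g + h) ` H" by (rule someI)
      then obtain k where "k \<in> H" "(SOME g'. g' \<in> (\<lambda>h. g + h) ` H) = g + k" by blast
      then have "ract s (SOME g'. g' \<in> (\<lambda>h. g + h) ` H) = b" using ract_per[OF H] b by simp
      then show "b \<in> (\<lambda>C. ract s (SOME g. g \<in> C)) ` ((\<lambda>g. (\<lambda>h. g + h) ` H) ` UNIV)"
        by (intro image_eqI[of _ _ "(\<lambda>h. g + h) ` H"]) auto
    qed
    moreover have "finite ((\<lambda>g. (\<lambda>h. g + h) ` H) ` UNIV)" using H(1) by (simp add: nfi_subgroup_def)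
    ultimately show ?thesis by (rule finite_subset[OF _ finite_imageI])
  qed
  have Bsol: "\<forall>b\<in>B. is_sol \<alpha> b" using ss sol_ract by (auto simp: B_def)
  have Bper: "\<forall>b\<in>B. periodic H b" using H per_ract by (auto simp: B_def)
  define V where "V = {(\<lambda>h t. \<Sum>b\<in>B. c b * b h t) | c. True}"
  have sB: "s \<in> B" unfolding B_def using ract_0 by (metis rangeI)
  have "s \<in> V"
  proof -
    have "(\<lambda>h t. \<Sum>b\<in>B. (if b = s then 1 else 0) * b h t) = s"
    proof (intro ext)
      fix h t
      have "(\<Sum>b\<in>B. (if b = s then 1 else 0) * b h t) = (\<Sum>b\<in>B. if b = s then s h t else 0)"
        by (intro sum.cong) auto
      also have "\<dots> = s h t" using finB sB by simp
      finally show "(\<Sum>b\<in>B. (if b = s then 1 else 0) * b h t) = s h t" .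
    qed
    then show ?thesis unfolding V_def by (intro CollectI exI[of _ "\<lambda>b. if b = s then 1 else 0"]) auto
  qed
  moreover have "V \<subseteq> Sol_per \<alpha>"
  proof
    fix v assume "v \<in> V"
    then obtain c where v: "v = (\<lambda>h t. \<Sum>b\<in>B. c b * b h t)" by (auto simp: V_def)
    show "v \<in> Sol_per \<alpha>" unfolding Sol_per_def v
      using sol_lin[OF finB Bsol] per_lin[OF Bper] H(1) by blast
  qed
  moreover have "fd_G_module V"
    unfolding fd_G_module_def
  proof (intro conjI ballI allI)
    show "\<exists>B. finite B \<and> V = {(\<lambda>h t. \<Sum>b\<in>B. c b * b h t) | c. True}"
      using finB V_def by blast
  next
    fix v g assume "v \<in> V"
    then obtain c where v: "v = (\<lambda>h t. \<Sum>b\<in>B. c b * b h t)" by (auto simp: V_def)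
    have "ract v g = (\<lambda>h t. \<Sum>b\<in>B. c (ract b (- g)) * b h t)"
    proof (intro ext)
      fix h t
      have "ract v g h t = (\<Sum>b\<in>B. c b * ract b g h t)" by (simp add: v ract_def)
      also have "\<dots> = (\<Sum>b\<in>B. c (ract b (- g)) * b h t)"
      proof (rule sum.reindex_bij_witness[where i="\<lambda>b. ract b (- g)" and j="\<lambda>b. ract b g"])
        fix b assume "b \<in> B"
        show "ract (ract b g) (- g) = b" by (simp add: ract_ract ract_0)
        show "ract b g \<in> B" using \<open>b \<in> B\<close> by (auto simp: B_def ract_ract)
        show "c (ract (ract b g) (- g)) * ract b g h t = c b * ract b g h t" by (simp add: ract_ract ract_0)
      next
        fix b assume "b \<in> B"
        show "ract (ract b (- g)) g = b" by (simp add: ract_ract ract_0)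
        show "ract b (- g) \<in> B" using \<open>b \<in> B\<close> by (auto simp: B_def ract_ract)
      qed
      finally show "ract v g h t = (\<Sum>b\<in>B. c (ract b (- g)) * b h t)" .
    qed
    then show "ract v g \<in> V" unfolding V_def by (intro CollectI exI[of _ "\<lambda>b. c (ract b (- g))"]) auto
  qed
  ultimately show ?thesis by blast
qed

lemma part_c2:
  fixes \<alpha> :: "'g::group_add \<Rightarrow> nat \<Rightarrow> complex"
  shows "\<exists>act :: ('g::group_add \<Rightarrow> nat \<Rightarrow> complex) \<Rightarrow> ('g set \<Rightarrow> 'g set) \<Rightarrow> ('g \<Rightarrow> nat \<Rightarrow> complex).
        (\<forall>s\<in>Sol_per \<alpha>. \<forall>x\<in>profin. act s x \<in> Sol_per \<alpha>) \<and>
        (\<forall>s\<in>Sol_per \<alpha>. \<forall>g. act s (profin_of g) = ract s g) \<and>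
        (\<forall>s\<in>Sol_per \<alpha>. \<forall>x\<in>profin. \<forall>y\<in>profin. act s (profin_mult x y) = act (act s x) y) \<and>
        (\<forall>s\<in>Sol_per \<alpha>. \<forall>s'\<in>Sol_per \<alpha>. \<forall>a b::complex. \<forall>x\<in>profin.
            act (\<lambda>h t. a * s h t + b * s' h t) x = (\<lambda>h t. a * act s x h t + b * act s' x h t)) \<and>
        (\<forall>s\<in>Sol_per \<alpha>. \<exists>H. nfi_subgroup H \<and>
            (\<forall>x\<in>profin. \<forall>y\<in>profin. x H = y H \<longrightarrow> act s x = act s y))"
proof (intro exI[of _ act_pro] conjI ballI allI impI)
  fix s and x :: "'g set \<Rightarrow> 'g set" assume s: "s \<in> Sol_per \<alpha>" and x: "x \<in> profin"
  obtain H where ss: "is_sol \<alpha> s" and H: "nfi_subgroup H" "periodic H s"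
    using s by (auto simp: Sol_per_def)
  obtain g where g: "g \<in> x H" using profin_ne[OF x H(1)] by blast
  show "act_pro s x \<in> Sol_per \<alpha>"
    unfolding act_A[OF H x g] Sol_per_def using sol_ract[OF ss] per_ract[OF H] H(1) by blast
next
  fix s and g :: 'g assume s: "s \<in> Sol_per \<alpha>"
  obtain H where H: "nfi_subgroup H" "periodic H s"
    using s by (auto simp: Sol_per_def)
  have x: "profin_of g \<in> profin"
    unfolding profin_def profin_of_def by auto
  have "g \<in> profin_of g H" using H(1) by (auto simp: profin_of_def nfi_subgroup_def intro: image_eqI[of _ _ 0])
  then show "act_pro s (profin_of g) = ract s g" by (rule act_A[OF H x])
next
  fix s and x y :: "'g set \<Rightarrow> 'g set" assume s: "s \<in> Sol_per \<alpha>" and x: "x \<in> profin" and y: "y \<in> profin"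
  obtain H where H: "nfi_subgroup H" "periodic H s"
    using s by (auto simp: Sol_per_def)
  have hs: "nfi_subgroup (Hs s)" "periodic (Hs s) s" using Hs_spec[OF H] by auto
  obtain a where a: "a \<in> x (Hs s)" using profin_ne[OF x hs(1)] by blast
  obtain b where b: "b \<in> y (Hs s)" using profin_ne[OF y hs(1)] by blast
  have "a + b \<in> profin_mult x y (Hs s)" using a b by (auto simp: profin_mult_def)
  then have "(SOME g. g \<in> profin_mult x y (Hs s)) \<in> profin_mult x y (Hs s)" by (rule someI)
  then obtain a' b' where ab: "(SOME g. g \<in> profin_mult x y (Hs s)) = a' + b'" "a' \<in> x (Hs s)" "b' \<in> y (Hs s)"
    by (auto simp: profin_mult_def)
  have "act_pro s (profin_mult x y) = ract s (a' + b')" by (simp add: act_pro_def ab(1))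
  also have "\<dots> = act_pro (ract s a') y"
    using act_A[OF hs(1) per_ract[OF hs] y ab(3)] by (simp add: ract_ract)
  also have "ract s a' = act_pro s x" using act_A[OF hs x ab(2)] by simp
  finally show "act_pro s (profin_mult x y) = act_pro (act_pro s x) y" .
next
  fix s s' a b and x :: "'g set \<Rightarrow> 'g set" assume s: "s \<in> Sol_per \<alpha>" and s': "s' \<in> Sol_per \<alpha>" and x: "x \<in> profin"
  obtain H1 where H1: "nfi_subgroup H1" "periodic H1 s" using s by (auto simp: Sol_per_def)
  obtain H2 where H2: "nfi_subgroup H2" "periodic H2 s'" using s' by (auto simp: Sol_per_def)
  define K where "K = H1 \<inter> H2"
  have K: "nfi_subgroup K" unfolding K_def using nfi_inter H1 H2 by blast
  have p1: "periodic K s" using per_mono[OF H1(2)] by (auto simp: K_def)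
  have p2: "periodic K s'" using per_mono[OF H2(2)] by (auto simp: K_def)
  have p3: "periodic K (\<lambda>h t. a * s h t + b * s' h t)" using p1 p2 by (simp add: periodic_def)
  obtain g where g: "g \<in> x K" using profin_ne[OF x K] by blast
  show "act_pro (\<lambda>h t. a * s h t + b * s' h t) x = (\<lambda>h t. a * act_pro s x h t + b * act_pro s' x h t)"
    unfolding act_A[OF K p1 x g] act_A[OF K p2 x g] act_A[OF K p3 x g] by (simp add: ract_def)
next
  fix s assume s: "s \<in> Sol_per \<alpha>"
  obtain H where H: "nfi_subgroup H" "periodic H s"
    using s by (auto simp: Sol_per_def)
  have hs: "nfi_subgroup (Hs s)" using Hs_spec[OF H] by auto
  show "\<exists>H. nfi_subgroup H \<and> (\<forall>x\<in>profin. \<forall>y\<in>profin. x H = y H \<longrightarrow> act_pro s x = act_pro s y)"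
    using hs by (intro exI[of _ "Hs s"]) (auto simp: act_pro_def)
qed

theorem proposition1p12:
  fixes K :: "(nat \<Rightarrow> complex) set"
    and \<alpha> \<phi> :: "'g::group_add \<Rightarrow> nat \<Rightarrow> complex"
  assumes K: "sigma_subring_const_C K"
    and \<alpha>_fin: "finite (supp \<alpha>)"
    and \<alpha>_K: "\<forall>h. \<alpha> h \<in> K"
    and \<phi>_sol: "is_sol \<alpha> \<phi>"
    and \<phi>_init: "\<forall>g. \<phi> g 0 = (if g = 0 then 1 else 0)"
  shows
    \<comment> \<open>(a) Sol_c is the direct sum of the lines spanned by the translates of phi\<close>
    "(Sol_c \<alpha> = {(\<lambda>h t. \<Sum>g\<in>{g. c g \<noteq> 0}. c g * ract \<phi> g h t) | c. finite {g. c g \<noteq> 0}}) \<and>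
     (\<forall>c. finite {g. c g \<noteq> 0} \<longrightarrow>
          (\<lambda>h t. \<Sum>g\<in>{g. c g \<noteq> 0}. c g * ract \<phi> g h t) = (\<lambda>h t. 0) \<longrightarrow> (\<forall>g. c g = 0)) \<and>
     \<comment> \<open>(b) Sol is the set of pointwise-finite sums of multiples of the translates of phi\<close>
     (Sol \<alpha> = {(\<lambda>h t. \<Sum>g | c g * ract \<phi> g h t \<noteq> 0. c g * ract \<phi> g h t) | c.
                  \<forall>h t. finite {g. c g * ract \<phi> g h t \<noteq> 0}}) \<and>
     \<comment> \<open>(c1) Sol_per is a union of finite dimensional G-modules\<close>
     (\<forall>s\<in>Sol_per \<alpha>. \<exists>V. s \<in> V \<and> V \<subseteq> Sol_per \<alpha> \<and> fd_G_module V) \<and>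
     \<comment> \<open>(c2) the G-action on Sol_per extends to a continuous linear action of G^pro\<close>
     (\<exists>act :: ('g \<Rightarrow> nat \<Rightarrow> complex) \<Rightarrow> ('g set \<Rightarrow> 'g set) \<Rightarrow> ('g \<Rightarrow> nat \<Rightarrow> complex).
        (\<forall>s\<in>Sol_per \<alpha>. \<forall>x\<in>profin. act s x \<in> Sol_per \<alpha>) \<and>
        (\<forall>s\<in>Sol_per \<alpha>. \<forall>g. act s (profin_of g) = ract s g) \<and>
        (\<forall>s\<in>Sol_per \<alpha>. \<forall>x\<in>profin. \<forall>y\<in>profin. act s (profin_mult x y) = act (act s x) y) \<and>
        (\<forall>s\<in>Sol_per \<alpha>. \<forall>s'\<in>Sol_per \<alpha>. \<forall>a b::complex. \<forall>x\<in>profin.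
            act (\<lambda>h t. a * s h t + b * s' h t) x = (\<lambda>h t. a * act s x h t + b * act s' x h t)) \<and>
        (\<forall>s\<in>Sol_per \<alpha>. \<exists>H. nfi_subgroup H \<and>
            (\<forall>x\<in>profin. \<forall>y\<in>profin. x H = y H \<longrightarrow> act s x = act s y)))"
  proof -
  have fin: "\<And>t. finite {g. \<phi> g t \<noteq> 0}" using phi_fin[OF \<alpha>_fin \<phi>_sol \<phi>_init] .
  note PA = part_a[OF \<alpha>_fin \<phi>_sol \<phi>_init]
  have C1: "\<forall>s\<in>Sol_per \<alpha>. \<exists>V. s \<in> V \<and> V \<subseteq> Sol_per \<alpha> \<and> fd_G_module V"
    using part_c1[of _ \<alpha>] by blast
  show ?thesis
    by (intro conjI PA[THEN conjunct1] PA[THEN conjunct2] part_b[OF \<alpha>_fin \<phi>_sol \<phi>_init] C1 part_c2)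
qed

end
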